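(* Let $p,q$ be positive integers with $p>2q$, and let $F$ be a triangle-free graph. Then the following are equivalent: (1) every clique blowup $G$ of $F$ satisfies $\chi(G)\leq\lceil\frac{p}{2q}\omega(G)\rceil$; (2) every clique blowup $G'$ of $F$ with $\omega(G')\leq\max\{\frac{2q(p-q-2)}{p-2q},\,2q\}$ satisfies $\chi(G')\leq\lceil\frac{p}{2q}\omega(G')\rceil$.
   Context: All graphs are finite and simple. $\chi(G)$ denotes the chromatic number and $\omega(G)$ the clique number (maximum size of a set of pairwise adjacent vertices) of $G$. Substituting a vertex $v$ of a graph $H$ by a graph $K$ produces the graph with vertex set $V(K)\cup V(H-v)$ and edge set $E(K)\cup E(H-v)\cup\{xy : x\in V(K),\ y\in N_H(v)\}$. A clique blowup of a graph $H$ is a graph obtained from $H$ by substituting every vertex of $H$ by a clique (a complete graph), where these cliques are allowed to be empty. *)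

theory Defs
  imports Complex_Main
begin

definition simple_graph :: "'a set \<Rightarrow> ('a \<Rightarrow> 'a \<Rightarrow> bool) \<Rightarrow> bool" where
  "simple_graph V E \<longleftrightarrow> finite V \<and>
     (\<forall>x y. E x y \<longrightarrow> x \<in> V \<and> y \<in> V \<and> x \<noteq> y \<and> E y x)"

definition triangle_free :: "'a set \<Rightarrow> ('a \<Rightarrow> 'a \<Rightarrow> bool) \<Rightarrow> bool" where
  "triangle_free V E \<longleftrightarrow>
     \<not> (\<exists>x\<in>V. \<exists>y\<in>V. \<exists>z\<in>V. E x y \<and> E y z \<and> E x z)"

definition is_clique :: "'a set \<Rightarrow> ('a \<Rightarrow> 'a \<Rightarrow> bool) \<Rightarrow> 'a set \<Rightarrow> bool" where
  "is_clique V E K \<longleftrightarrow> K \<subseteq> V \<and> (\<forall>x\<in>K. \<forall>y\<in>K. x \<noteq> y \<longrightarrow> E x y)"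

definition clique_number :: "'a set \<Rightarrow> ('a \<Rightarrow> 'a \<Rightarrow> bool) \<Rightarrow> nat" where
  "clique_number V E = Max {card K | K. is_clique V E K}"

definition proper_colouring :: "'a set \<Rightarrow> ('a \<Rightarrow> 'a \<Rightarrow> bool) \<Rightarrow> nat \<Rightarrow> ('a \<Rightarrow> nat) \<Rightarrow> bool" where
  "proper_colouring V E k c \<longleftrightarrow> (\<forall>x\<in>V. c x < k) \<and>
     (\<forall>x\<in>V. \<forall>y\<in>V. E x y \<longrightarrow> c x \<noteq> c y)"

definition chromatic_number :: "'a set \<Rightarrow> ('a \<Rightarrow> 'a \<Rightarrow> bool) \<Rightarrow> nat" where
  "chromatic_number V E = (LEAST k. \<exists>c. proper_colouring V E k c)"

text \<open>Clique blowup of (V,E) where vertex v is substituted by a clique of size n v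
  (possibly 0). Every clique blowup is isomorphic to one of this form.\<close>
definition blowup_verts :: "'a set \<Rightarrow> ('a \<Rightarrow> nat) \<Rightarrow> ('a \<times> nat) set" where
  "blowup_verts V n = {(v, i). v \<in> V \<and> i < n v}"

definition blowup_adj :: "'a set \<Rightarrow> ('a \<Rightarrow> 'a \<Rightarrow> bool) \<Rightarrow> ('a \<Rightarrow> nat)
    \<Rightarrow> ('a \<times> nat) \<Rightarrow> ('a \<times> nat) \<Rightarrow> bool" where
  "blowup_adj V E n x y \<longleftrightarrow> x \<in> blowup_verts V n \<and> y \<in> blowup_verts V n \<and>
     ((fst x = fst y \<and> snd x \<noteq> snd y) \<or> E (fst x) (fst y))"

end

theory Submission imports Defs begin
definition gg :: "nat \<Rightarrow> nat \<Rightarrow> nat \<Rightarrow> nat" where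
 "gg q c x = (if x + q \<le> c then 0 else if x + q \<ge> c + 2*q then 2*q else x + q - c)"
definition ff :: "nat \<Rightarrow> nat \<Rightarrow> nat \<Rightarrow> nat" where
 "ff q w x = gg q (if 2*x > w then (w+1) div 2 else w div 2) x"

lemma ff_c: fixes w :: nat obtains h where "w = 2*h" "\<And>x. (if 2*x > w then (w+1) div 2 else w div 2) = h"
  | h where "w = 2*h+1" "\<And>x. (if 2*x > w then (w+1) div 2 else w div 2) = (if x > h then h+1 else h)"
proof -
  consider "even w" | "odd w" by blast
  then show ?thesis
  proof cases
    case 1 then obtain h where "w = 2*h" by blast
    then show ?thesis using that(1)[of h] by simp
  next
    case 2 then obtain h where h: "w = 2*h+1" by (blast elim: oddE)
    have "(if 2*x > w then (w+1) div 2 else w div 2) = (if x > h then h+1 else h)" for x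
      using h by auto
    then show ?thesis using that(2)[of h] h by blast
  qed
qed

lemma ff1: assumes "2*q < w" "x \<le> w" shows "ff q w x \<le> x \<and> ff q w x \<le> 2*q \<and> x \<le> ff q w x + (w - 2*q)"
proof (cases w rule: ff_c)
  case (1 h) then show ?thesis using assms unfolding ff_def gg_def by auto
next
  case (2 h) then show ?thesis using assms unfolding ff_def gg_def by auto
qed
lemma ff2: assumes "2*q < w" "x + y \<le> w" shows "ff q w x + ff q w y \<le> 2*q \<and> x + y \<le> ff q w x + ff q w y + (w - 2*q)"
proof (cases w rule: ff_c)
  case (1 h) then show ?thesis using assms unfolding ff_def gg_def by auto
next
  case (2 h) then show ?thesis using assms unfolding ff_def gg_def by auto
qed
lemma bv_Sigma: "blowup_verts V n = Sigma V (\<lambda>v. {..<n v})"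
  unfolding blowup_verts_def by auto

lemma bv_finite: "finite V \<Longrightarrow> finite (blowup_verts V n)"
  unfolding bv_Sigma by auto

lemma cliques_finite:
  assumes "finite V"
  shows "finite {card K | K. is_clique (blowup_verts V n) (blowup_adj V E n) K}"
proof -
  have "{card K | K. is_clique (blowup_verts V n) (blowup_adj V E n) K} \<subseteq> card ` Pow (blowup_verts V n)"
    unfolding is_clique_def by auto
  then show ?thesis using bv_finite[OF assms] finite_subset by blast
qed

lemma clique_ge:
  assumes "finite V" "is_clique (blowup_verts V n) (blowup_adj V E n) K"
  shows "card K \<le> clique_number (blowup_verts V n) (blowup_adj V E n)"
  unfolding clique_number_def using cliques_finite[OF assms(1)] assms(2)
  by (intro Max_ge) auto

lemma clique_lower1:
  assumes "simple_graph V E" "v \<in> V"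
  shows "n v \<le> clique_number (blowup_verts V n) (blowup_adj V E n)"
proof -
  have fin: "finite V" using assms(1) unfolding simple_graph_def by auto
  have "is_clique (blowup_verts V n) (blowup_adj V E n) ({v} \<times> {..<n v})"
    using assms unfolding is_clique_def blowup_adj_def blowup_verts_def by auto
  from clique_ge[OF fin this] show ?thesis by (simp add: card_cartesian_product_singleton)
qed

lemma clique_lower2:
  assumes "simple_graph V E" "E u v"
  shows "n u + n v \<le> clique_number (blowup_verts V n) (blowup_adj V E n)"
proof -
  have fin: "finite V" and uv: "u \<in> V" "v \<in> V" "u \<noteq> v" "E v u"
    using assms unfolding simple_graph_def by auto
  let ?K = "({u} \<times> {..<n u}) \<union> ({v} \<times> {..<n v})"
  have "is_clique (blowup_verts V n) (blowup_adj V E n) ?K"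
    using assms uv unfolding is_clique_def blowup_adj_def blowup_verts_def by auto
  from clique_ge[OF fin this] have "card ?K \<le> clique_number (blowup_verts V n) (blowup_adj V E n)" .
  moreover have "card ?K = n u + n v"
    using uv by (subst card_Un_disjoint) (auto simp: card_cartesian_product_singleton)
  ultimately show ?thesis by simp
qed

lemma clique_upper:
  assumes "simple_graph V E" "triangle_free V E"
    and "\<And>v. v \<in> V \<Longrightarrow> m v \<le> B" and "\<And>u v. E u v \<Longrightarrow> m u + m v \<le> B"
  shows "clique_number (blowup_verts V m) (blowup_adj V E m) \<le> B"
proof -
  have fin: "finite V" using assms(1) unfolding simple_graph_def by auto
  have "card K \<le> B" if K: "is_clique (blowup_verts V m) (blowup_adj V E m) K" for K
  proof -
    have Ksub: "K \<subseteq> blowup_verts V m" using K unfolding is_clique_def by auto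
    have adj: "E a b" if "a \<in> fst ` K" "b \<in> fst ` K" "a \<noteq> b" for a b
      using that K unfolding is_clique_def blowup_adj_def by force
    have AV: "fst ` K \<subseteq> V" using Ksub unfolding blowup_verts_def by auto
    show ?thesis
    proof (cases "K = {}")
      case True then show ?thesis by simp
    next
      case False
      then obtain a where a: "a \<in> fst ` K" by auto
      show ?thesis
      proof (cases "fst ` K \<subseteq> {a}")
        case True
        have "K \<subseteq> {a} \<times> {..<m a}"
        proof
          fix x assume x: "x \<in> K"
          then have "fst x = a" using True by auto
          then show "x \<in> {a} \<times> {..<m a}" using x Ksub unfolding blowup_verts_def by (cases x) auto
        qed
        then have "card K \<le> card ({a} \<times> {..<m a})" by (intro card_mono) auto
        also have "\<dots> = m a" by (simp add: card_cartesian_product_singleton)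
        finally show ?thesis using assms(3) a AV by force
      next
        case False
        then obtain b where b: "b \<in> fst ` K" "b \<noteq> a" by auto
        have "fst ` K \<subseteq> {a, b}"
        proof
          fix c assume c: "c \<in> fst ` K"
          show "c \<in> {a, b}"
          proof (rule ccontr)
            assume "c \<notin> {a, b}"
            then have ca: "c \<noteq> a" "c \<noteq> b" by auto
            have "E a b" "E b c" "E a c" using adj a b c ca by metis+
            then show False using assms(2) a b c AV unfolding triangle_free_def by blast
          qed
        qed
        then have sub2: "K \<subseteq> ({a} \<times> {..<m a}) \<union> ({b} \<times> {..<m b})"
        proof -
          assume ab: "fst ` K \<subseteq> {a, b}"
          show ?thesis
          proof
            fix x assume x: "x \<in> K"
            then have "fst x = a \<or> fst x = b" using ab by auto
            then show "x \<in> ({a} \<times> {..<m a}) \<union> ({b} \<times> {..<m b})"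
              using x Ksub unfolding blowup_verts_def by (cases x) auto
          qed
        qed
        then have "K \<subseteq> ({a} \<times> {..<m a}) \<union> ({b} \<times> {..<m b})" .
        then have "card K \<le> card (({a} \<times> {..<m a}) \<union> ({b} \<times> {..<m b}))" by (intro card_mono) auto
        also have "\<dots> \<le> card ({a} \<times> {..<m a}) + card ({b} \<times> {..<m b})" by (rule card_Un_le)
        also have "\<dots> = m a + m b" by (simp add: card_cartesian_product_singleton)
        finally show ?thesis using assms(4) adj a b by force
      qed
    qed
  qed
  then show ?thesis unfolding clique_number_def using cliques_finite[OF fin, of m E]
    by (subst Max_le_iff) (auto intro: exI[of _ "{}"] simp: is_clique_def)
qed

lemma chrom_le: assumes "proper_colouring V E k c" shows "chromatic_number V E \<le> k"
  unfolding chromatic_number_def using assms by (blast intro: Least_le)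

lemma chrom_ex:
  assumes "finite V" "\<And>x. \<not> E x x"
  shows "\<exists>c. proper_colouring V E (chromatic_number V E) c"
proof -
  obtain h where h: "bij_betw h V {0..<card V}" using ex_bij_betw_finite_nat[OF assms(1)] by blast
  have "proper_colouring V E (card V) h"
    unfolding proper_colouring_def using h assms(2)
    by (auto simp: bij_betw_def inj_on_def)
  then have "\<exists>k c. proper_colouring V E k c" by blast
  then show ?thesis unfolding chromatic_number_def by (rule LeastI_ex)
qed

lemma blowup_irrefl: "simple_graph V E \<Longrightarrow> \<not> blowup_adj V E n x x"
  unfolding blowup_adj_def simple_graph_def by auto

lemma chrom_split:
  assumes sg: "simple_graph V E" and mn: "\<And>a. m a \<le> n a"
  shows "chromatic_number (blowup_verts V n) (blowup_adj V E n) \<le>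
     chromatic_number (blowup_verts V m) (blowup_adj V E m) +
     chromatic_number (blowup_verts V (\<lambda>a. n a - m a)) (blowup_adj V E (\<lambda>a. n a - m a))"
proof -
  have fin: "finite V" using sg unfolding simple_graph_def by auto
  let ?d = "\<lambda>a. n a - m a"
  let ?k1 = "chromatic_number (blowup_verts V m) (blowup_adj V E m)"
  let ?k2 = "chromatic_number (blowup_verts V ?d) (blowup_adj V E ?d)"
  obtain c1 where c1: "proper_colouring (blowup_verts V m) (blowup_adj V E m) ?k1 c1"
    using chrom_ex[of "blowup_verts V m" "blowup_adj V E m"] bv_finite[OF fin] blowup_irrefl[OF sg] by blast
  obtain c2 where c2: "proper_colouring (blowup_verts V ?d) (blowup_adj V E ?d) ?k2 c2"
    using chrom_ex[of "blowup_verts V ?d" "blowup_adj V E ?d"] bv_finite[OF fin] blowup_irrefl[OF sg] by blast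
  define c where "c x = (if snd x < m (fst x) then c1 x else ?k1 + c2 (fst x, snd x - m (fst x)))" for x
  have "proper_colouring (blowup_verts V n) (blowup_adj V E n) (?k1 + ?k2) c"
    unfolding proper_colouring_def
  proof safe
    fix x assume x: "x \<in> blowup_verts V n"
    obtain v i where [simp]: "x = (v, i)" by force
    show "c x < ?k1 + ?k2"
    proof (cases "i < m v")
      case True
      then have "(v, i) \<in> blowup_verts V m" using x unfolding blowup_verts_def by auto
      then show ?thesis using c1 True unfolding proper_colouring_def c_def by force
    next
      case False
      then have "(v, i - m v) \<in> blowup_verts V ?d" using x unfolding blowup_verts_def by auto
      then show ?thesis using c2 False unfolding proper_colouring_def c_def by force
    qed
  next
    fix x y assume x: "x \<in> blowup_verts V n" and y: "y \<in> blowup_verts V n"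
      and xy: "blowup_adj V E n x y" and eq: "c x = c y"
    obtain v i where [simp]: "x = (v, i)" by force
    obtain u j where [simp]: "y = (u, j)" by force
    have adj: "(v = u \<and> i \<noteq> j) \<or> E v u" using xy unfolding blowup_adj_def by auto
    show False
    proof (cases "i < m v")
      case True note iv = True
      then have xm: "(v, i) \<in> blowup_verts V m" using x unfolding blowup_verts_def by auto
      show False
      proof (cases "j < m u")
        case True
        then have "(u, j) \<in> blowup_verts V m" using y unfolding blowup_verts_def by auto
        then have "blowup_adj V E m (v, i) (u, j)" using xm adj unfolding blowup_adj_def by auto
        then show False using c1 eq iv True xm \<open>(u, j) \<in> blowup_verts V m\<close>
          unfolding proper_colouring_def c_def by auto
      next
        case False
        then show False using c1 eq iv xm unfolding proper_colouring_def c_def by force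
      qed
    next
      case False note iv = False
      then have xm: "(v, i - m v) \<in> blowup_verts V ?d" using x unfolding blowup_verts_def by auto
      show False
      proof (cases "j < m u")
        case True
        then have "(u, j) \<in> blowup_verts V m" using y unfolding blowup_verts_def by auto
        then show False using c1 eq iv True unfolding proper_colouring_def c_def by force
      next
        case False
        then have ym: "(u, j - m u) \<in> blowup_verts V ?d" using y unfolding blowup_verts_def by auto
        have "(v = u \<and> i - m v \<noteq> j - m u) \<or> E v u" using adj iv False by auto
        then have "blowup_adj V E ?d (v, i - m v) (u, j - m u)" using xm ym unfolding blowup_adj_def by auto
        then show False using c2 eq iv False xm ym unfolding proper_colouring_def c_def by auto
      qed
    qed
  qed
  then show ?thesis by (rule chrom_le)
qed


theorem theorem1p1:
  fixes p q :: nat and V :: "'a set" and E :: "'a \<Rightarrow> 'a \<Rightarrow> bool"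
  assumes "q > 0" and "p > 2 * q"
    and "simple_graph V E" and "triangle_free V E"
  shows "(\<forall>n. int (chromatic_number (blowup_verts V n) (blowup_adj V E n))
            \<le> \<lceil>real p / (2 * real q) * real (clique_number (blowup_verts V n) (blowup_adj V E n))\<rceil>)
     \<longleftrightarrow>
     (\<forall>n. real (clique_number (blowup_verts V n) (blowup_adj V E n))
            \<le> max (2 * real q * (real p - real q - 2) / (real p - 2 * real q)) (2 * real q)
          \<longrightarrow> int (chromatic_number (blowup_verts V n) (blowup_adj V E n))
            \<le> \<lceil>real p / (2 * real q) * real (clique_number (blowup_verts V n) (blowup_adj V E n))\<rceil>)"
proof
  assume H1: "\<forall>n. int (chromatic_number (blowup_verts V n) (blowup_adj V E n))
            \<le> \<lceil>real p / (2 * real q) * real (clique_number (blowup_verts V n) (blowup_adj V E n))\<rceil>"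
  then show "\<forall>n. real (clique_number (blowup_verts V n) (blowup_adj V E n))
            \<le> max (2 * real q * (real p - real q - 2) / (real p - 2 * real q)) (2 * real q)
          \<longrightarrow> int (chromatic_number (blowup_verts V n) (blowup_adj V E n))
            \<le> \<lceil>real p / (2 * real q) * real (clique_number (blowup_verts V n) (blowup_adj V E n))\<rceil>"
    by blast
next
  define om where "om = (\<lambda>n. clique_number (blowup_verts V n) (blowup_adj V E n))"
  define ch where "ch = (\<lambda>n. chromatic_number (blowup_verts V n) (blowup_adj V E n))"
  assume H2: "\<forall>n. real (clique_number (blowup_verts V n) (blowup_adj V E n))
            \<le> max (2 * real q * (real p - real q - 2) / (real p - 2 * real q)) (2 * real q)
          \<longrightarrow> int (chromatic_number (blowup_verts V n) (blowup_adj V E n))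
            \<le> \<lceil>real p / (2 * real q) * real (clique_number (blowup_verts V n) (blowup_adj V E n))\<rceil>"
  have H2': "int (ch n) \<le> \<lceil>real p / (2 * real q) * real (om n)\<rceil>" if "om n \<le> 2 * q" for n
  proof -
    have "real (om n) \<le> max (2 * real q * (real p - real q - 2) / (real p - 2 * real q)) (2 * real q)"
      using that by (simp add: le_max_iff_disj)
    then show ?thesis using H2 unfolding om_def ch_def by blast
  qed
  have pq: "real p / (2 * real q) > 0" using assms(1,2) by simp
  have main: "\<forall>n. om n = w \<longrightarrow> int (ch n) \<le> \<lceil>real p / (2 * real q) * real (om n)\<rceil>" for w
  proof (induction w rule: less_induct)
    case (less w)
    show ?case
    proof (intro allI impI)
      fix n assume w: "om n = w"
      show "int (ch n) \<le> \<lceil>real p / (2 * real q) * real (om n)\<rceil>"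
      proof (cases "w \<le> 2 * q")
        case True then show ?thesis using H2' w by blast
      next
        case False
        then have wq: "2 * q < w" by simp
        define m where "m = (\<lambda>a. if a \<in> V then ff q w (n a) else 0)"
        define d where "d = (\<lambda>a. n a - m a)"
        have nv: "n v \<le> w" if "v \<in> V" for v
          using clique_lower1[OF assms(3) that, of n] w unfolding om_def by simp
        have ne: "n u + n v \<le> w" if "E u v" for u v
          using clique_lower2[OF assms(3) that, of n] w unfolding om_def by simp
        have EV: "u \<in> V" "v \<in> V" if "E u v" for u v
          using that assms(3) unfolding simple_graph_def by auto
        have mn: "m a \<le> n a" for a
          using ff1[OF wq nv, of a] unfolding m_def by auto
        have om_m: "om m \<le> 2 * q" unfolding om_def
        proof (rule clique_upper[OF assms(3,4)])
          show "m v \<le> 2 * q" if "v \<in> V" for v using ff1[OF wq nv[OF that]] that unfolding m_def by auto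
          show "m u + m v \<le> 2 * q" if "E u v" for u v
            using ff2[OF wq ne[OF that]] EV[OF that] unfolding m_def by auto
        qed
        have om_d: "om d \<le> w - 2 * q" unfolding om_def
        proof (rule clique_upper[OF assms(3,4)])
          show "d v \<le> w - 2 * q" if "v \<in> V" for v using ff1[OF wq nv[OF that]] that unfolding d_def m_def by auto
          show "d u + d v \<le> w - 2 * q" if "E u v" for u v
            using ff2[OF wq ne[OF that]] ff1[OF wq nv[OF EV(1)[OF that]]] ff1[OF wq nv[OF EV(2)[OF that]]]
              EV[OF that] unfolding d_def m_def by auto
        qed
        have split: "ch n \<le> ch m + ch d"
          unfolding ch_def d_def using chrom_split[OF assms(3) mn] by simp
        have chm: "int (ch m) \<le> int p"
        proof -
          have "int (ch m) \<le> \<lceil>real p / (2 * real q) * real (om m)\<rceil>" using H2' om_m by blast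
          also have "\<dots> \<le> \<lceil>real p / (2 * real q) * (2 * real q)\<rceil>"
            using om_m pq by (intro ceiling_mono mult_left_mono) auto
          also have "\<dots> = int p" using assms(1) by simp
          finally show ?thesis .
        qed
        have chd: "int (ch d) \<le> \<lceil>real p / (2 * real q) * real w\<rceil> - int p"
        proof -
          have "om d < w" using om_d wq assms(1) by simp
          then have "int (ch d) \<le> \<lceil>real p / (2 * real q) * real (om d)\<rceil>" using less by blast
          also have "\<dots> \<le> \<lceil>real p / (2 * real q) * (real w - 2 * real q)\<rceil>"
            using om_d pq wq by (intro ceiling_mono mult_left_mono) (auto simp: of_nat_diff)
          also have "real p / (2 * real q) * (real w - 2 * real q) = real p / (2 * real q) * real w - real_of_int (int p)"
            using assms(1) by (simp add: field_simps)
          also have "\<lceil>real p / (2 * real q) * real w - real_of_int (int p)\<rceil> = \<lceil>real p / (2 * real q) * real w\<rceil> - int p"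
            by (rule ceiling_diff_of_int)
          finally show ?thesis .
        qed
        have "int (ch n) \<le> int (ch m) + int (ch d)" using split by linarith
        then show ?thesis using chm chd unfolding w by linarith
      qed
    qed
  qed
  show "\<forall>n. int (chromatic_number (blowup_verts V n) (blowup_adj V E n))
            \<le> \<lceil>real p / (2 * real q) * real (clique_number (blowup_verts V n) (blowup_adj V E n))\<rceil>"
    using main unfolding om_def ch_def by blast
qed

end
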